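(* There exists a constant $C>1$ such that for every positive integer $n$, \[ s(P_n) \leq C \max_{0\leq r \leq n} \left| Q^{(r)}(P_n) \right|. \]
   Context: For a positive integer $n$, $P_n$ is the path on vertex set $[n]=\{1,\dots,n\}$ with edges $\{i,i+1\}$, $1\le i\le n-1$. A set $A\subseteq[n]$ is $P_n$-independent if it contains no two consecutive integers. $Q(P_n)$ is the family of all $P_n$-independent subsets of $[n]$, and $Q^{(r)}(P_n)$ is the family of its members of size $r$. An antichain in $Q(P_n)$ is a subfamily in which no member is a proper subset of another. $s(P_n)$ denotes the maximum size of an antichain in $Q(P_n)$. *)

theory Defs
  imports Complex_Main
begin

text \<open>P_n-independent subsets of [n] = {1..n}: no two consecutive integers.\<close>
definition path_indep :: "nat \<Rightarrow> nat set \<Rightarrow> bool" where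
  "path_indep n A \<longleftrightarrow> A \<subseteq> {1..n} \<and> (\<forall>i\<in>A. Suc i \<notin> A)"

definition Q_path :: "nat \<Rightarrow> nat set set" where
  "Q_path n = {A. path_indep n A}"

definition Q_path_r :: "nat \<Rightarrow> nat \<Rightarrow> nat set set" where
  "Q_path_r n r = {A \<in> Q_path n. card A = r}"

definition is_antichain_in :: "'a set set \<Rightarrow> 'a set set \<Rightarrow> bool" where
  "is_antichain_in F Q \<longleftrightarrow> F \<subseteq> Q \<and> (\<forall>A\<in>F. \<forall>B\<in>F. \<not> A \<subset> B)"

definition s_path :: "nat \<Rightarrow> nat" where
  "s_path n = Max {card F | F. is_antichain_in F (Q_path n)}"

end

theory Submission
  imports Defs
begin

definition antich :: "'a set set \<Rightarrow> bool" where
  "antich F \<longleftrightarrow> (\<forall>A\<in>F. \<forall>B\<in>F. \<not> A \<subset> B)"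

lemma LYM:
  "finite U \<Longrightarrow> F \<subseteq> Pow U \<Longrightarrow> antich F \<Longrightarrow>
     (\<Sum>A\<in>F. 1 / real (card U choose card A)) \<le> 1"
proof (induction "card U" arbitrary: U F)
  case 0
  then have "U = {}" by simp
  with 0 have "F \<subseteq> {{}}" by auto
  then have "F = {} \<or> F = {{}}" by (rule subset_singletonD)
  then show ?case
  proof
    assume "F = {}" then show ?thesis by simp
  next
    assume "F = {{}}" then show ?thesis using \<open>U = {}\<close> by simp
  qed
next
  case (Suc d U F)
  have finF: "finite F" using Suc.prems by (meson finite_Pow_iff finite_subset)
  show ?case
  proof (cases "U \<in> F")
    case True
    then have "F = {U}" using Suc.prems unfolding antich_def by blast
    then show ?thesis by simp
  next
    case False
    have cardlt: "card A < Suc d" if "A \<in> F" for A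
    proof -
      have "A \<subset> U" using that False Suc.prems by blast
      then show ?thesis using Suc.hyps(2) Suc.prems(1) psubset_card_mono by metis
    qed
    have IH: "(\<Sum>A\<in>{A\<in>F. x \<notin> A}. 1 / real (d choose card A)) \<le> 1" if "x \<in> U" for x
    proof -
      have "card (U - {x}) = d" using Suc.hyps(2) that by simp
      moreover have "(\<Sum>A\<in>{A\<in>F. x \<notin> A}. 1 / real (card (U - {x}) choose card A)) \<le> 1"
        apply (rule Suc.hyps(1))
        using Suc.hyps(2) that Suc.prems unfolding antich_def by auto
      ultimately show ?thesis by simp
    qed
    have "(\<Sum>x\<in>U. \<Sum>A\<in>{A\<in>F. x \<notin> A}. 1 / real (d choose card A)) \<le> (\<Sum>x\<in>U. 1)"
      by (rule sum_mono) (rule IH)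
    also have "\<dots> = real (Suc d)" using Suc.hyps(2) by simp
    finally have A: "(\<Sum>x\<in>U. \<Sum>A\<in>{A\<in>F. x \<notin> A}. 1 / real (d choose card A)) \<le> real (Suc d)" .
    have "(\<Sum>x\<in>U. \<Sum>A\<in>{A\<in>F. x \<notin> A}. 1 / real (d choose card A))
        = (\<Sum>A\<in>F. \<Sum>x\<in>{x\<in>U. x \<notin> A}. 1 / real (d choose card A))"
      using sum.swap_restrict[OF Suc.prems(1) finF, of "\<lambda>x A. 1 / real (d choose card A)" "\<lambda>x A. x \<notin> A"]
      by simp
    also have "\<dots> = (\<Sum>A\<in>F. real (Suc d) / real (Suc d choose card A))"
    proof (rule sum.cong[OF refl])
      fix A assume AF: "A \<in> F"
      have AU: "A \<subseteq> U" using AF Suc.prems by blast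
      have "{x\<in>U. x \<notin> A} = U - A" by blast
      then have c: "card {x\<in>U. x \<notin> A} = Suc d - card A"
        using AU Suc.hyps(2) Suc.prems(1) by (simp add: card_Diff_subset finite_subset)
      have k: "card A < Suc d" using cardlt AF .
      have eq: "(Suc d choose card A) * (Suc d - card A) = Suc d * (d choose card A)"
        using binomial_absorb_comp[of "Suc d" "card A"] by (simp add: mult.commute)
      have pos1: "(d choose card A) > 0" using k by simp
      have pos2: "(Suc d choose card A) > 0" using k by simp
      have "real (Suc d choose card A) * real (Suc d - card A) = real (Suc d) * real (d choose card A)"
        using eq by (metis of_nat_mult)
      then show "(\<Sum>x\<in>{x\<in>U. x \<notin> A}. 1 / real (d choose card A)) = real (Suc d) / real (Suc d choose card A)"
        using pos1 pos2 c by (simp add: field_simps)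
    qed
    also have "\<dots> = real (Suc d) * (\<Sum>A\<in>F. 1 / real (Suc d choose card A))"
      by (simp add: sum_distrib_left)
    finally have "real (Suc d) * (\<Sum>A\<in>F. 1 / real (Suc d choose card A)) \<le> real (Suc d)"
      using A by linarith
    then have "(\<Sum>A\<in>F. 1 / real (Suc d choose card A)) \<le> 1"
      by (simp add: mult_le_cancel_left1)
    then show ?thesis using Suc.hyps(2) by simp
  qed
qed

lemma sperner:
  assumes "finite U" "F \<subseteq> Pow U" "antich F"
  shows "card F \<le> card U choose (card U div 2)"
proof -
  have finF: "finite F" using assms by (meson finite_Pow_iff finite_subset)
  let ?m = "real (card U choose (card U div 2))"
  have "real (card F) = (\<Sum>A\<in>F. 1)" by simp
  also have "\<dots> \<le> (\<Sum>A\<in>F. ?m / real (card U choose card A))"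
  proof (rule sum_mono)
    fix A assume "A \<in> F"
    then have "A \<subseteq> U" using assms by blast
    then have "card A \<le> card U" using assms(1) card_mono by blast
    then have p: "real (card U choose card A) > 0" by simp
    have "real (card U choose card A) \<le> ?m" using binomial_maximum by (metis of_nat_le_iff)
    then show "1 \<le> ?m / real (card U choose card A)" using p by simp
  qed
  also have "\<dots> = ?m * (\<Sum>A\<in>F. 1 / real (card U choose card A))"
    by (simp add: sum_distrib_left)
  also have "\<dots> \<le> ?m * 1"
    by (rule mult_left_mono[OF LYM[OF assms]]) simp
  finally show ?thesis by simp
qed

lemma central_rec: "((2*k+2) choose (k+1)) * (k+1) = 2 * (2*k+1) * ((2*k) choose k)"
proof -
  have a: "Suc k * (Suc (2*k+1) choose Suc k) = Suc (2*k+1) * ((2*k+1) choose k)"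
    by (rule Suc_times_binomial)
  have b: "Suc k * (Suc (2*k) choose Suc k) = Suc (2*k) * ((2*k) choose k)"
    by (rule Suc_times_binomial)
  have c: "((2*k+1) choose k) = ((2*k+1) choose (k+1))"
    using binomial_symmetric[of k "2*k+1"] by simp
  obtain C x y where C: "C = ((2*k+2) choose (k+1))" and x: "x = ((2*k+1) choose (k+1))"
     and y: "y = ((2*k) choose k)" by blast
  have a': "(k+1) * C = (2*k+2) * x" using a c C x by simp
  have b': "(k+1) * x = (2*k+1) * y" using b x y by simp
  have "(k+1) * C = (k+1) * (2*x)" using a' by (simp add: algebra_simps)
  then have "C = 2*x" using mult_left_cancel[of "k+1" C "2*x"] by linarith
  then have "C * (k+1) = 2 * ((k+1)*x)" by (simp add: algebra_simps)
  also have "\<dots> = 2*(2*k+1)*y" using b' by simp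
  finally show ?thesis using C y by simp
qed

lemma central_even: "((2*k) choose k)^2 * (3*k+1) \<le> 16^k"
proof (induction k)
  case 0 then show ?case by simp
next
  case (Suc k)
  let ?b = "(2*k) choose k" and ?c = "(2*k+2) choose (k+1)"
  have r: "?c * (k+1) = 2*(2*k+1) * ?b" by (rule central_rec)
  have poly: "(2*k+1)^2 * (3*k+4) \<le> 4*(k+1)^2*(3*k+1)"
    by (simp add: power2_eq_square algebra_simps)
  have "?c^2 * (3*k+4) * (k+1)^2 = (?c*(k+1))^2 * (3*k+4)"
    by (simp add: power2_eq_square algebra_simps)
  also have "\<dots> = 4 * ?b^2 * ((2*k+1)^2 * (3*k+4))"
    using r by (simp add: power2_eq_square algebra_simps)
  also have "\<dots> \<le> 4 * ?b^2 * (4*(k+1)^2*(3*k+1))"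
    using poly by (intro mult_left_mono) simp_all
  also have "\<dots> = 16 * (?b^2 * (3*k+1)) * (k+1)^2"
    by (simp add: algebra_simps)
  also have "\<dots> \<le> 16 * 16^k * (k+1)^2"
    using Suc.IH by (intro mult_right_mono mult_left_mono) simp_all
  finally have "?c^2 * (3*k+4) * (k+1)^2 \<le> 16^(Suc k) * (k+1)^2" by simp
  then have "?c^2 * (3*k+4) \<le> 16^(Suc k)"
    by (metis mult_le_cancel2 zero_less_Suc zero_less_power Suc_eq_plus1)
  then show ?case by (simp add: algebra_simps)
qed

lemma central_sq: "(d choose (d div 2))^2 * (d+1) \<le> 4^d"
proof (cases "even d")
  case True
  then obtain k where d: "d = 2*k" by blast
  have "((2*k) choose k)^2 * (2*k+1) \<le> ((2*k) choose k)^2 * (3*k+1)"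
    by (intro mult_left_mono) simp_all
  also have "\<dots> \<le> 16^k" by (rule central_even)
  also have "16^k = (4::nat)^(2*k)" by (simp add: power_mult)
  finally show ?thesis using d by simp
next
  case False
  then obtain k where d: "d = 2*k+1" using oddE by blast
  have dd: "d div 2 = k" using d by simp
  have s: "((2*k+2) choose (k+1)) = 2 * ((2*k+1) choose k)"
  proof -
    have "((2*k+2) choose (k+1)) = ((2*k+1) choose k) + ((2*k+1) choose (k+1))"
      using binomial_Suc_Suc[of "2*k+1" k] by simp
    moreover have "((2*k+1) choose k) = ((2*k+1) choose (k+1))"
      using binomial_symmetric[of k "2*k+1"] by simp
    ultimately show ?thesis by simp
  qed
  have e: "((2*(k+1)) choose (k+1))^2 * (3*(k+1)+1) \<le> 16^(k+1)" by (rule central_even)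
  have "4 * (((2*k+1) choose k)^2 * (2*k+2)) \<le> 4 * (((2*k+1) choose k)^2 * (3*k+4))"
    by (intro mult_left_mono) simp_all
  also have "\<dots> = ((2*(k+1)) choose (k+1))^2 * (3*(k+1)+1)"
    using s by (simp add: power2_eq_square algebra_simps)
  also have "\<dots> \<le> 16^(k+1)" by (rule e)
  also have "\<dots> = 4 * 4^(2*k+1)" by (simp add: power_mult power_add)
  finally have "((2*k+1) choose k)^2 * (2*k+2) \<le> 4^(2*k+1)" by simp
  then show ?thesis using d dd by simp
qed

lemma central_real: "real (d choose (d div 2)) \<le> 2^d / sqrt (real d + 1)"
proof -
  have "real ((d choose (d div 2))^2 * (d+1)) \<le> real (4^d)"
    using central_sq of_nat_le_iff by blast
  moreover have "real (4^d) = ((2::real)^d)^2"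
    by (simp add: power_mult_distrib[symmetric] power2_eq_square power_even_eq)
  ultimately have h: "(real (d choose (d div 2)))^2 * (real d + 1) \<le> (2^d)^2"
    by (simp add: algebra_simps)
  have p: "sqrt (real d + 1) > 0" by simp
  have "real (d choose (d div 2)) * sqrt (real d + 1) = sqrt ((real (d choose (d div 2)))^2 * (real d + 1))"
    by (simp add: real_sqrt_mult)
  also have "\<dots> \<le> sqrt ((2^d)^2)" using h real_sqrt_le_mono by blast
  also have "\<dots> = 2^d" by simp
  finally show ?thesis using p by (simp add: field_simps)
qed

lemma Q_alt: "Q_path n = {A. A \<subseteq> {1..n} \<and> (\<forall>i\<in>A. Suc i \<notin> A)}"
  unfolding Q_path_def path_indep_def by simp

lemma Q_sub: "Q_path n \<subseteq> Pow {1..n}"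
  unfolding Q_alt by auto

lemma Q_fin: "finite (Q_path n)"
  using Q_sub finite_subset by blast

lemma Q_elem_fin: "A \<in> Q_path n \<Longrightarrow> finite A"
  using Q_sub finite_subset by blast

lemma Q0: "Q_path 0 = {{}}"
  unfolding Q_alt by auto

lemma Q1: "Q_path (Suc 0) = {{}, {1}}"
  unfolding Q_alt by auto

lemma Q_rec: "Q_path (Suc (Suc m)) = Q_path (Suc m) \<union> insert (Suc (Suc m)) ` Q_path m"
proof (rule set_eqI, rule iffI)
  fix A assume A: "A \<in> Q_path (Suc (Suc m))"
  show "A \<in> Q_path (Suc m) \<union> insert (Suc (Suc m)) ` Q_path m"
  proof (cases "Suc (Suc m) \<in> A")
    case True
    have "Suc m \<notin> A" using A True unfolding Q_alt by auto
    then have "A - {Suc (Suc m)} \<in> Q_path m" using A unfolding Q_alt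
      by (auto simp: subset_iff) (metis atLeastAtMost_iff le_Suc_eq)
    moreover have "A = insert (Suc (Suc m)) (A - {Suc (Suc m)})" using True by auto
    ultimately show ?thesis by blast
  next
    case False
    then have "A \<in> Q_path (Suc m)" using A unfolding Q_alt
      by (auto simp: subset_iff) (metis atLeastAtMost_iff le_Suc_eq)
    then show ?thesis by blast
  qed
next
  fix A assume "A \<in> Q_path (Suc m) \<union> insert (Suc (Suc m)) ` Q_path m"
  then show "A \<in> Q_path (Suc (Suc m))"
    unfolding Q_alt by (auto simp: subset_iff)
qed

lemma Q_rec_disj: "Q_path (Suc m) \<inter> insert (Suc (Suc m)) ` Q_path m = {}"
  unfolding Q_alt by auto

lemma Q_rec_inj: "inj_on (insert (Suc (Suc m))) (Q_path m)"
proof (rule inj_onI)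
  fix x y assume x: "x \<in> Q_path m" and y: "y \<in> Q_path m" and e: "insert (Suc (Suc m)) x = insert (Suc (Suc m)) y"
  have "Suc (Suc m) \<notin> x" "Suc (Suc m) \<notin> y" using x y unfolding Q_alt by auto
  then have "x = insert (Suc (Suc m)) x - {Suc (Suc m)}" "y = insert (Suc (Suc m)) y - {Suc (Suc m)}" by auto
  then show "x = y" using e by metis
qed

lemma card_Q_rec: "card (Q_path (Suc (Suc m))) = card (Q_path (Suc m)) + card (Q_path m)"
proof -
  have "card (Q_path (Suc (Suc m))) = card (Q_path (Suc m)) + card (insert (Suc (Suc m)) ` Q_path m)"
    unfolding Q_rec by (rule card_Un_disjoint) (simp_all add: Q_fin Q_rec_disj)
  also have "card (insert (Suc (Suc m)) ` Q_path m) = card (Q_path m)"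
    by (rule card_image[OF Q_rec_inj])
  finally show ?thesis .
qed

lemma card_Q_lower: "(8/5::real)^n \<le> real (card (Q_path n))"
proof (induction n rule: less_induct)
  case (less n)
  show ?case
  proof (cases n)
    case 0 then show ?thesis by (simp add: Q0)
  next
    case (Suc m)
    show ?thesis
    proof (cases m)
      case 0 then show ?thesis using Suc by (simp add: Q1)
    next
      case (Suc k)
      have "(8/5::real)^n = (8/5)^k * (64/25)" using Suc \<open>n = Suc m\<close> by simp
      also have "\<dots> \<le> (8/5)^k * (8/5 + 1)" by (intro mult_left_mono) simp_all
      also have "\<dots> = (8/5)^(Suc k) + (8/5)^k" by (simp add: algebra_simps)
      also have "\<dots> \<le> real (card (Q_path (Suc k))) + real (card (Q_path k))"
      proof (rule add_mono)
        show "(8/5::real)^(Suc k) \<le> real (card (Q_path (Suc k)))"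
          using less.IH[of "Suc k"] Suc \<open>n = Suc m\<close> by simp
        show "(8/5::real)^k \<le> real (card (Q_path k))"
          using less.IH[of k] Suc \<open>n = Suc m\<close> by simp
      qed
      also have "\<dots> = real (card (Q_path n))"
        using card_Q_rec[of k] Suc \<open>n = Suc m\<close> by simp
      finally show ?thesis .
    qed
  qed
qed

lemma Qr_alt: "Q_path_r n r = {A \<in> Q_path n. card A = r}"
  unfolding Q_path_r_def by simp

lemma Qr_0: "Q_path_r n 0 = {{}}"
  unfolding Qr_alt using Q_elem_fin by (auto simp: Q_alt)

lemma Qr_rec: "Q_path_r (Suc (Suc m)) (Suc i) = Q_path_r (Suc m) (Suc i) \<union> insert (Suc (Suc m)) ` Q_path_r m i"
proof -
  have fin: "\<And>A. A \<in> Q_path m \<Longrightarrow> Suc (Suc m) \<notin> A" unfolding Q_alt by auto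
  show ?thesis
    unfolding Qr_alt Q_rec using fin Q_elem_fin by (auto simp: card_insert_if)
qed

lemma card_Qr: "card (Q_path_r n r) = (n + 1 - r) choose r"
proof (induction n arbitrary: r rule: less_induct)
  case (less n)
  show ?case
  proof (cases r)
    case 0 then show ?thesis by (simp add: Qr_0)
  next
    case (Suc i)
    show ?thesis
    proof (cases n)
      case 0
      then show ?thesis using Suc by (simp add: Qr_alt Q0)
    next
      case (Suc m)
      show ?thesis
      proof (cases m)
        case 0
        have "Q_path_r (Suc 0) r = (if r = 1 then {{1}} else {})"
          using \<open>r = Suc i\<close> by (auto simp: Qr_alt Q1)
        then show ?thesis using \<open>n = Suc m\<close> 0 \<open>r = Suc i\<close> by (cases i) auto
      next
        case (Suc k)
        have n: "n = Suc (Suc k)" using Suc \<open>n = Suc m\<close> by simp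
        have fin1: "finite (Q_path_r (Suc k) (Suc i))" unfolding Qr_alt using Q_fin by simp
        have dis: "Q_path_r (Suc k) (Suc i) \<inter> insert (Suc (Suc k)) ` Q_path_r k i = {}"
          using Q_rec_disj[of k] unfolding Qr_alt by blast
        have inj: "inj_on (insert (Suc (Suc k))) (Q_path_r k i)"
          using Q_rec_inj[of k] unfolding Qr_alt by (rule inj_on_subset) blast
        have "card (Q_path_r n r) = card (Q_path_r (Suc k) (Suc i)) + card (Q_path_r k i)"
          unfolding n \<open>r = Suc i\<close> Qr_rec
          using fin1 dis card_image[OF inj] Q_fin
          by (subst card_Un_disjoint) (auto simp: Qr_alt)
        also have "\<dots> = ((k + 1 - i) choose (Suc i)) + ((k + 1 - i) choose i)"
          using less.IH n by simp
        also have "\<dots> = (n + 1 - r) choose r"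
        proof (cases "i \<le> k + 1")
          case True
          then have "n + 1 - r = Suc (k + 1 - i)" using n \<open>r = Suc i\<close> by simp
          then show ?thesis using \<open>r = Suc i\<close> by simp
        next
          case False
          then show ?thesis using n \<open>r = Suc i\<close> by simp
        qed
        finally show ?thesis .
      qed
    qed
  qed
qed

definition Ev :: "nat \<Rightarrow> nat set" where "Ev n = {i\<in>{1..n}. even i}"
definition fr :: "nat \<Rightarrow> nat set \<Rightarrow> nat set" where
  "fr n E = {i\<in>{1..n}. odd i \<and> i - 1 \<notin> E \<and> Suc i \<notin> E}"

lemma Ev_fin: "finite (Ev n)" unfolding Ev_def by simp
lemma fr_fin: "finite (fr n E)" unfolding fr_def by simp

lemma card_Ev: "card (Ev n) = n div 2"
proof -
  have "Ev n = (\<lambda>j. 2*j) ` {1..n div 2}"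
    unfolding Ev_def by (auto simp: image_iff elim!: evenE)
  moreover have "inj_on (\<lambda>j. 2*j) {1..n div 2}" by (auto simp: inj_on_def)
  ultimately show ?thesis by (simp add: card_image)
qed

lemma blk_eq:
  assumes E: "E \<subseteq> Ev n"
  shows "{A \<in> Q_path n. A \<inter> Ev n = E} = (\<lambda>T. E \<union> T) ` Pow (fr n E)"
proof (rule set_eqI, rule iffI)
  fix A assume "A \<in> {A \<in> Q_path n. A \<inter> Ev n = E}"
  then have A: "A \<in> Q_path n" and AE: "A \<inter> Ev n = E" by auto
  have sub: "A - Ev n \<subseteq> fr n E"
  proof
    fix i assume i: "i \<in> A - Ev n"
    have iA: "i \<in> A" and iB: "1 \<le> i \<and> i \<le> n" using i A unfolding Q_alt by auto
    have oi: "odd i" using i iB unfolding Ev_def by auto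
    have "i - 1 \<notin> A"
    proof
      assume "i - 1 \<in> A"
      moreover have "Suc (i - 1) = i" using iB by simp
      ultimately show False using A iA unfolding Q_alt by force
    qed
    moreover have "Suc i \<notin> A" using A iA unfolding Q_alt by auto
    ultimately show "i \<in> fr n E" using AE iB oi unfolding fr_def by auto
  qed
  have "A = E \<union> (A - Ev n)" using AE by auto
  then show "A \<in> (\<lambda>T. E \<union> T) ` Pow (fr n E)" using sub by blast
next
  fix A assume "A \<in> (\<lambda>T. E \<union> T) ` Pow (fr n E)"
  then obtain T where T: "T \<subseteq> fr n E" and A: "A = E \<union> T" by auto
  have Eev: "\<And>i. i \<in> E \<Longrightarrow> even i \<and> 1 \<le> i \<and> i \<le> n" using E unfolding Ev_def by auto
  have Tod: "\<And>i. i \<in> T \<Longrightarrow> odd i \<and> 1 \<le> i \<and> i \<le> n \<and> i - 1 \<notin> E \<and> Suc i \<notin> E"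
    using T unfolding fr_def by auto
  have "A \<in> Q_path n"
    unfolding Q_alt
  proof (intro CollectI conjI ballI)
    show "A \<subseteq> {1..n}" using A Eev Tod by auto
  next
    fix i assume i: "i \<in> A"
    show "Suc i \<notin> A"
    proof
      assume si: "Suc i \<in> A"
      show False
      proof (cases "i \<in> E")
        case True
        then have "even i" using Eev by blast
        then have "Suc i \<notin> E" using Eev by fastforce
        then have "Suc i \<in> T" using si A by blast
        then show False using Tod True by fastforce
      next
        case False
        then have iT: "i \<in> T" using i A by blast
        then have "odd i" using Tod by blast
        then have "Suc i \<notin> T" using Tod by fastforce
        then have "Suc i \<in> E" using si A by blast
        then show False using Tod iT by blast
      qed
    qed
  qed
  moreover have "A \<inter> Ev n = E"
  proof -
    have "T \<inter> Ev n = {}" using Tod unfolding Ev_def by auto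
    then show ?thesis using A E by auto
  qed
  ultimately show "A \<in> {A \<in> Q_path n. A \<inter> Ev n = E}" by blast
qed

lemma blk_inj: "E \<subseteq> Ev n \<Longrightarrow> inj_on (\<lambda>T. E \<union> T) (Pow (fr n E))"
proof (rule inj_onI)
  fix S T assume E: "E \<subseteq> Ev n" and S: "S \<in> Pow (fr n E)" and T: "T \<in> Pow (fr n E)" and e: "E \<union> S = E \<union> T"
  have "S \<inter> E = {}" "T \<inter> E = {}" using S T E unfolding fr_def Ev_def by auto
  then show "S = T" using e by blast
qed

lemma card_blk: "E \<subseteq> Ev n \<Longrightarrow> card {A \<in> Q_path n. A \<inter> Ev n = E} = 2 ^ card (fr n E)"
  using blk_eq[of E n] card_image[OF blk_inj[of E n]] card_Pow fr_fin by metis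

lemma card_fibers:
  assumes "finite S" "finite T" "g ` S \<subseteq> T"
  shows "card S = (\<Sum>y\<in>T. card {x \<in> S. g x = y})"
proof -
  have "(\<Sum>y\<in>T. sum (\<lambda>_. 1::nat) {x. x \<in> S \<and> g x = y}) = sum (\<lambda>_. 1) S"
    by (rule sum.group[OF assms])
  then show ?thesis by simp
qed

lemma card_Q_blocks: "card (Q_path n) = (\<Sum>E\<in>Pow (Ev n). 2 ^ card (fr n E))"
proof -
  have "card (Q_path n) = (\<Sum>E\<in>Pow (Ev n). card {A \<in> Q_path n. A \<inter> Ev n = E})"
    by (rule card_fibers[where g="\<lambda>A. A \<inter> Ev n"]) (use Q_fin Ev_fin in blast)+
  also have "\<dots> = (\<Sum>E\<in>Pow (Ev n). 2 ^ card (fr n E))"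
    by (rule sum.cong) (auto intro: card_blk)
  finally show ?thesis .
qed

lemma antichain_blocks:
  assumes F: "F \<subseteq> Q_path n" and ac: "antich F"
  shows "card F \<le> (\<Sum>E\<in>Pow (Ev n). card (fr n E) choose (card (fr n E) div 2))"
proof -
  have finF: "finite F" using F Q_fin finite_subset by blast
  have "card F = (\<Sum>E\<in>Pow (Ev n). card {A \<in> F. A \<inter> Ev n = E})"
    by (rule card_fibers[where g="\<lambda>A. A \<inter> Ev n"]) (use finF Ev_fin in blast)+
  also have "\<dots> \<le> (\<Sum>E\<in>Pow (Ev n). card (fr n E) choose (card (fr n E) div 2))"
  proof (rule sum_mono)
    fix E assume "E \<in> Pow (Ev n)"
    then have E: "E \<subseteq> Ev n" by simp
    let ?G = "{A \<in> F. A \<inter> Ev n = E}"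
    let ?g = "\<lambda>A. A - Ev n"
    have Gsub: "?G \<subseteq> (\<lambda>T. E \<union> T) ` Pow (fr n E)" using blk_eq[OF E] F by blast
    have rep: "\<And>A. A \<in> ?G \<Longrightarrow> A = E \<union> ?g A" by auto
    have inj: "inj_on ?g ?G"
      by (rule inj_onI) (metis rep)
    have img: "?g ` ?G \<subseteq> Pow (fr n E)"
    proof
      fix X assume "X \<in> ?g ` ?G"
      then obtain A where A: "A \<in> ?G" and X: "X = A - Ev n" by blast
      obtain T where T: "T \<subseteq> fr n E" "A = E \<union> T" using Gsub A by blast
      have "T \<inter> Ev n = {}" using T unfolding fr_def Ev_def by auto
      then have "X = T" using X T E by auto
      then show "X \<in> Pow (fr n E)" using T by simp
    qed
    have ac2: "antich (?g ` ?G)"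
      unfolding antich_def
    proof (intro ballI notI)
      fix X Y assume X: "X \<in> ?g ` ?G" and Y: "Y \<in> ?g ` ?G" and XY: "X \<subset> Y"
      then obtain A B where A: "A \<in> ?G" "X = ?g A" and B: "B \<in> ?G" "Y = ?g B" by blast
      have "A \<subset> B"
      proof -
        have "A = E \<union> X" "B = E \<union> Y" using rep A B by auto
        moreover have "Y \<inter> E = {}" using B E by auto
        ultimately show ?thesis using XY by blast
      qed
      then show False using A B ac unfolding antich_def by blast
    qed
    have "card ?G = card (?g ` ?G)" using card_image[OF inj] by simp
    also have "\<dots> \<le> card (fr n E) choose (card (fr n E) div 2)"
      by (rule sperner[OF fr_fin img ac2])
    finally show "card ?G \<le> card (fr n E) choose (card (fr n E) div 2)" .
  qed
  finally show ?thesis .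
qed

definition aa :: "nat \<Rightarrow> nat \<Rightarrow> real" where "aa n r = real ((n + 1 - r) choose r)"

definition RR :: "nat \<Rightarrow> nat \<Rightarrow> real" where
  "RR n r = ((real n + 1 - 2 * real r) * (real n - 2 * real r)) / ((real r + 1) * (real n + 1 - real r))"

lemma binom_step_nat:
  assumes "k + 1 \<le> m"
  shows "((m - 1) choose (k + 1)) * (k + 1) * m = (m choose k) * (m - k) * (m - k - 1)"
proof -
  obtain j where j: "m = Suc j" using assms by (cases m) auto
  have kj: "k \<le> j" using assms j by simp
  have e1: "(m - k) * (m choose k) = m * (j choose k)"
    using binomial_absorb_comp[of m k] j by simp
  have e2: "Suc k * (j choose Suc k) = j * ((j - 1) choose k)" by (rule binomial_absorption)
  have e3: "(j - k) * (j choose k) = j * ((j - 1) choose k)" by (rule binomial_absorb_comp)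
  have "((m - 1) choose (k + 1)) * (k + 1) * m = (Suc k * (j choose Suc k)) * m"
    using j by (simp add: mult.commute)
  also have "\<dots> = ((j - k) * (j choose k)) * m" using e2 e3 by simp
  also have "\<dots> = (j - k) * (m * (j choose k))" by (simp add: algebra_simps)
  also have "\<dots> = (j - k) * ((m - k) * (m choose k))" using e1 by simp
  also have "\<dots> = (m choose k) * (m - k) * (m - k - 1)" using j kj by (simp add: algebra_simps)
  finally show ?thesis .
qed

lemma aa_step:
  assumes "2 * r \<le> n"
  shows "aa n (Suc r) = RR n r * aa n r"
proof -
  let ?m = "n + 1 - r"
  have m1: "r + 1 \<le> ?m" using assms by simp
  have "((?m - 1) choose (r + 1)) * (r + 1) * ?m = (?m choose r) * (?m - r) * (?m - r - 1)"
    by (rule binom_step_nat[OF m1])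
  then have "real ((?m - 1) choose (r + 1)) * (real r + 1) * real ?m = real (?m choose r) * real (?m - r) * real (?m - r - 1)"
    by (metis of_nat_mult of_nat_Suc Suc_eq_plus1 add.commute)
  moreover have "?m - 1 = n + 1 - Suc r" by simp
  moreover have "real (?m - r) = real n + 1 - 2 * real r" using assms by simp
  moreover have "real (?m - r - 1) = real n - 2 * real r" using assms by simp
  moreover have "real ?m = real n + 1 - real r" using assms by simp
  ultimately have eq: "aa n (Suc r) * ((real r + 1) * (real n + 1 - real r)) =
      aa n r * ((real n + 1 - 2 * real r) * (real n - 2 * real r))"
    unfolding aa_def by (simp only: mult.assoc Suc_eq_plus1)
  have pos: "(real r + 1) * (real n + 1 - real r) > 0" using assms by simp
  show ?thesis unfolding RR_def using eq pos by (simp add: field_simps)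
qed

lemma RR_nonneg: "2 * r \<le> n \<Longrightarrow> RR n r \<ge> 0"
  unfolding RR_def by (intro divide_nonneg_pos mult_nonneg_nonneg mult_pos_pos) auto

lemma RR_gap:
  assumes "2 * (r + L) \<le> n"
  shows "RR n (r + L) \<le> (1 - 2 * real L / (real n + 1)) * RR n r"
proof -
  define X where "X = real n - 2 * real r"
  define Y where "Y = real n + 1 - real r"
  define p where "p = real r + 1"
  define th where "th = 2 * real L / (real n + 1)"
  have hX: "X \<ge> 2 * real L" using assms unfolding X_def by simp
  have hY: "Y - real L > 0" using assms unfolding Y_def by simp
  have hXY: "X \<le> 2 * Y" unfolding X_def Y_def by simp
  have hp: "p > 0" unfolding p_def by simp
  have hX1: "X + 1 \<le> real n + 1" unfolding X_def by simp
  have th1: "th * (X + 1) \<le> 2 * real L"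
  proof -
    have "th * (X + 1) = 2 * real L * ((X + 1) / (real n + 1))" unfolding th_def by simp
    also have "\<dots> \<le> 2 * real L * 1"
      using hX1 hX by (intro mult_left_mono) (simp_all add: divide_le_eq_1)
    finally show ?thesis by simp
  qed
  have f1: "X + 1 - 2 * real L \<le> (1 - th) * (X + 1)" using th1 by (simp add: algebra_simps)
  have f2: "(X - 2 * real L) * Y \<le> X * (Y - real L)"
  proof -
    have "real L * X \<le> real L * (2 * Y)" using hXY by (intro mult_left_mono) simp_all
    then show ?thesis by (simp add: algebra_simps)
  qed
  have f3: "p \<le> p + real L" by simp
  have n1: "X + 1 - 2 * real L \<ge> 0" using hX by simp
  have thle: "th \<le> 1"
  proof -
    have a0: "th * (X + 1) \<le> X + 1" using th1 hX by linarith
    then have a: "th * (X + 1) \<le> 1 * (X + 1)" by simp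
    have b: "X + 1 > 0" using hX by simp
    show ?thesis using a mult_le_cancel_right_pos[OF b] by blast
  qed
  have n3: "(1 - th) * (X + 1) \<ge> 0" using thle hX by simp
  have n4: "X * (Y - real L) \<ge> 0" using hX hY by simp
  have n2: "(X - 2 * real L) * Y \<ge> 0" using hX hY by simp
  have "(X + 1 - 2 * real L) * ((X - 2 * real L) * Y) * p \<le> ((1 - th) * (X + 1)) * (X * (Y - real L)) * (p + real L)"
  proof (rule mult_mono)
    show "(X + 1 - 2 * real L) * ((X - 2 * real L) * Y) \<le> ((1 - th) * (X + 1)) * (X * (Y - real L))"
      by (rule mult_mono[OF f1 f2 n3 n2])
    show "p \<le> p + real L" by (rule f3)
    show "0 \<le> ((1 - th) * (X + 1)) * (X * (Y - real L))" using n3 n4 by simp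
    show "0 \<le> p" using hp by simp
  qed
  then have key: "(X + 1 - 2 * real L) * (X - 2 * real L) * (p * Y) \<le> (1 - th) * ((X + 1) * X) * ((p + real L) * (Y - real L))"
    by (simp add: algebra_simps)
  have e1: "RR n (r + L) = (X + 1 - 2 * real L) * (X - 2 * real L) / ((p + real L) * (Y - real L))"
    unfolding RR_def X_def Y_def p_def by (simp add: algebra_simps)
  have e2: "RR n r = ((X + 1) * X) / (p * Y)"
    unfolding RR_def X_def Y_def p_def by (simp add: algebra_simps)
  have d1: "(p + real L) * (Y - real L) > 0" using hp hY by simp
  have d2: "p * Y > 0" using hp hY by simp
  show ?thesis
    unfolding th_def[symmetric] e1 e2 using key d1 d2 by (simp add: field_simps)
qed

lemma geo_sum_shift:
  fixes x :: real
  assumes "0 \<le> x" "x < 1"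
  shows "(\<Sum>i<N. x ^ (i - c)) \<le> real c + 1 / (1 - x)"
proof -
  have "(\<Sum>i<N. x ^ (i - c)) \<le> real (min N c) + (1 - x ^ (N - c)) / (1 - x)"
  proof (induction N)
    case 0 then show ?case by simp
  next
    case (Suc N)
    show ?case
    proof (cases "N < c")
      case True
      then have "(\<Sum>i<Suc N. x ^ (i - c)) = (\<Sum>i<N. x ^ (i - c)) + 1" by simp
      also have "\<dots> \<le> real N + 1" using Suc.IH True by simp
      also have "\<dots> = real (min (Suc N) c) + (1 - x ^ (Suc N - c)) / (1 - x)" using True by simp
      finally show ?thesis .
    next
      case False
      have "(\<Sum>i<Suc N. x ^ (i - c)) = (\<Sum>i<N. x ^ (i - c)) + x ^ (N - c)" by simp
      also have "\<dots> \<le> real c + (1 - x ^ (N - c)) / (1 - x) + x ^ (N - c)"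
        using Suc.IH False by simp
      also have "\<dots> = real c + (1 - x ^ (Suc N - c)) / (1 - x)"
      proof -
        have e: "Suc N - c = Suc (N - c)" using False by simp
        show ?thesis using assms unfolding e by (simp add: field_simps)
      qed
      also have "\<dots> = real (min (Suc N) c) + (1 - x ^ (Suc N - c)) / (1 - x)" using False by simp
      finally show ?thesis .
    qed
  qed
  also have "\<dots> \<le> real c + 1 / (1 - x)"
  proof -
    have "real (min N c) \<le> real c" by simp
    moreover have "(1 - x ^ (N - c)) / (1 - x) \<le> 1 / (1 - x)"
      using assms by (intro divide_right_mono) simp_all
    ultimately show ?thesis by linarith
  qed
  finally show ?thesis .
qed

lemma aa_zero: "n + 1 < 2 * r \<Longrightarrow> aa n r = 0"
  unfolding aa_def by simp

lemma aa_nonneg: "aa n r \<ge> 0" unfolding aa_def by simp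

lemma aa_pos: "2 * r \<le> n + 1 \<Longrightarrow> aa n r > 0" unfolding aa_def by simp

lemma aa_0: "aa n 0 = 1" unfolding aa_def by simp

lemma sum_bound:
  assumes n1: "n \<ge> 1" and Mx: "\<forall>r\<le>n. aa n r \<le> Mx" and rsn: "rs \<le> n" and rsM: "aa n rs = Mx"
  shows "(\<Sum>r\<le>n. aa n r) \<le> 7 * sqrt (real n) * Mx"
proof -
  have M1: "Mx \<ge> 1" using Mx aa_0[of n] by force
  have allM: "aa n r \<le> Mx" for r
  proof (cases "r \<le> n")
    case True then show ?thesis using Mx by blast
  next
    case False then have "aa n r = 0" using n1 by (intro aa_zero) simp
    then show ?thesis using M1 by simp
  qed
  have rs2: "2 * rs \<le> n + 1"
  proof (rule ccontr)
    assume "\<not> 2 * rs \<le> n + 1"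
    then have "aa n rs = 0" by (intro aa_zero) simp
    then show False using rsM M1 by simp
  qed
  define L where "L = nat \<lfloor>sqrt (real n)\<rfloor>"
  have sq1: "sqrt (real n) \<ge> 1" using n1 by simp
  have L_le: "real L \<le> sqrt (real n)" unfolding L_def
    using sq1 by (simp add: of_nat_nat)
  have L_gt: "sqrt (real n) < real L + 1" unfolding L_def
    using sq1 by (simp add: of_nat_nat)
  have L1: "L \<ge> 1" unfolding L_def using sq1 by (simp add: le_nat_iff)
  have LL: "real L * real L \<le> real n"
  proof -
    have "real L * real L \<le> sqrt (real n) * sqrt (real n)"
      using L_le by (intro mult_mono) simp_all
    then show ?thesis by simp
  qed
  have L2: "2 * real L \<le> real n + 1"
  proof -
    have "0 \<le> (real L - 1)^2" by simp
    then have "2 * real L \<le> real L * real L + 1" by (simp add: power2_eq_square algebra_simps)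
    then show ?thesis using LL by linarith
  qed
  define x where "x = 1 - 2 * real L / (real n + 1)"
  have x0: "0 \<le> x" unfolding x_def using L2 by (simp add: field_simps)
  have x1: "x < 1" unfolding x_def using L1 by (simp add: field_simps)
  have xle: "x \<le> 1" using x1 by simp
  have RRrs: "RR n rs \<le> 1" if "2 * rs \<le> n"
  proof -
    have "RR n rs * aa n rs = aa n (Suc rs)" using aa_step[OF that] by simp
    also have "\<dots> \<le> aa n rs" using allM rsM by simp
    finally have "RR n rs * aa n rs \<le> 1 * aa n rs" by simp
    moreover have "aa n rs > 0" using rsM M1 by simp
    ultimately show ?thesis using mult_le_cancel_right_pos by blast
  qed
  have up_step: "aa n (Suc j) \<le> x * aa n j" if j: "rs + L \<le> j" for j
  proof (cases "2 * j \<le> n")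
    case True
    have g1: "RR n (j - L + L) \<le> x * RR n (j - L)"
      unfolding x_def by (rule RR_gap) (use True j in simp)
    have g2: "RR n (rs + (j - L - rs)) \<le> (1 - 2 * real (j - L - rs) / (real n + 1)) * RR n rs"
      by (rule RR_gap) (use True j in simp)
    have "RR n (j - L) \<le> RR n rs"
    proof -
      have "(1 - 2 * real (j - L - rs) / (real n + 1)) * RR n rs \<le> 1 * RR n rs"
        using RR_nonneg[of rs n] True j by (intro mult_right_mono) simp_all
      then show ?thesis using g2 j by simp
    qed
    also have "\<dots> \<le> 1" using RRrs True j by simp
    finally have "RR n (j - L) \<le> 1" .
    then have "x * RR n (j - L) \<le> x * 1" using x0 by (intro mult_left_mono) simp_all
    moreover have "j - L + L = j" using j by simp
    ultimately have "RR n j \<le> x" using g1 by simp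
    then have "RR n j * aa n j \<le> x * aa n j" using aa_nonneg by (intro mult_right_mono) simp_all
    then show ?thesis using aa_step[OF True] by simp
  next
    case False
    then have "aa n (Suc j) = 0" by (intro aa_zero) simp
    then show ?thesis using x0 aa_nonneg by simp
  qed
  have low_step: "aa n j \<le> x * aa n (Suc j)" if j: "j + L + 1 \<le> rs" for j
  proof -
    have rs1: "rs \<ge> 1" using j by simp
    have t: "2 * (rs - 1) \<le> n" using rs2 rs1 by simp
    have e: "aa n rs = RR n (rs - 1) * aa n (rs - 1)"
      using aa_step[OF t] rs1 by simp
    have p: "aa n (rs - 1) > 0" using rs2 by (intro aa_pos) simp
    have "RR n (rs - 1) * aa n (rs - 1) \<ge> 1 * aa n (rs - 1)" using e allM rsM by simp
    then have R1: "RR n (rs - 1) \<ge> 1" using p mult_le_cancel_right_pos by blast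
    have g2: "RR n ((j + L) + (rs - 1 - (j + L))) \<le> (1 - 2 * real (rs - 1 - (j + L)) / (real n + 1)) * RR n (j + L)"
      by (rule RR_gap) (use t j in simp)
    have "RR n (rs - 1) \<le> RR n (j + L)"
    proof -
      have "(1 - 2 * real (rs - 1 - (j + L)) / (real n + 1)) * RR n (j + L) \<le> 1 * RR n (j + L)"
        using RR_nonneg[of "j + L" n] t j by (intro mult_right_mono) simp_all
      then show ?thesis using g2 j by simp
    qed
    then have R2: "RR n (j + L) \<ge> 1" using R1 by simp
    have g1: "RR n (j + L) \<le> x * RR n j"
      unfolding x_def by (rule RR_gap) (use t j in simp)
    have tj: "2 * j \<le> n" using t j by simp
    have "aa n j = 1 * aa n j" by simp
    also have "\<dots> \<le> (x * RR n j) * aa n j" using R2 g1 aa_nonneg by (intro mult_right_mono) simp_all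
    also have "\<dots> = x * aa n (Suc j)" using aa_step[OF tj] by simp
    finally show ?thesis .
  qed
  have up_tail: "aa n (rs + L + i) \<le> x ^ i * Mx" for i
  proof (induction i)
    case 0 then show ?case using allM by simp
  next
    case (Suc i)
    have "aa n (rs + L + Suc i) = aa n (Suc (rs + L + i))" by simp
    also have "\<dots> \<le> x * aa n (rs + L + i)" by (rule up_step) simp
    also have "\<dots> \<le> x * (x ^ i * Mx)" using Suc.IH x0 by (intro mult_left_mono) simp_all
    finally show ?case by simp
  qed
  have low_tail: "i + L \<le> rs \<Longrightarrow> aa n (rs - L - i) \<le> x ^ i * Mx" for i
  proof (induction i)
    case 0 then show ?case using allM by simp
  next
    case (Suc i)
    have e: "Suc (rs - L - Suc i) = rs - L - i" using Suc.prems by simp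
    have "aa n (rs - L - Suc i) \<le> x * aa n (Suc (rs - L - Suc i))"
      by (rule low_step) (use Suc.prems in simp)
    also have "\<dots> = x * aa n (rs - L - i)" using e by simp
    also have "\<dots> \<le> x * (x ^ i * Mx)" using Suc x0 by (intro mult_left_mono) simp_all
    finally show ?case by simp
  qed
  have pt_hi: "aa n r \<le> Mx * x ^ (r - (rs + L))" if "rs \<le> r" for r
  proof (cases "rs + L \<le> r")
    case True
    then have "r = rs + L + (r - (rs + L))" by simp
    then have "aa n r = aa n (rs + L + (r - (rs + L)))" by simp
    also have "\<dots> \<le> x ^ (r - (rs + L)) * Mx" by (rule up_tail)
    finally show ?thesis by (simp add: mult.commute)
  next
    case False then show ?thesis using allM by simp
  qed
  have pt_lo: "aa n r \<le> Mx * x ^ ((rs - L) - r)" if "r < rs" for r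
  proof (cases "r + L \<le> rs")
    case True
    then have "r = rs - L - ((rs - L) - r)" by simp
    then have "aa n r = aa n (rs - L - ((rs - L) - r))" by simp
    also have "\<dots> \<le> x ^ ((rs - L) - r) * Mx" by (rule low_tail) (use True in simp)
    finally show ?thesis by (simp add: mult.commute)
  next
    case False then show ?thesis using allM by simp
  qed
  have G: "(\<Sum>i<N. x ^ (i - L)) \<le> real L + 1 / (1 - x)" for N
    by (rule geo_sum_shift[OF x0 x1])
  have S1: "(\<Sum>r<rs. aa n r) \<le> Mx * (real L + 1 / (1 - x))"
  proof -
    have "(\<Sum>r<rs. aa n r) \<le> (\<Sum>r<rs. Mx * x ^ ((rs - L) - r))"
      by (rule sum_mono, rule pt_lo) simp
    also have "\<dots> = (\<Sum>i<rs. Mx * x ^ ((rs - L) - (rs - Suc i)))"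
      by (rule sum.nat_diff_reindex[symmetric])
    also have "\<dots> \<le> (\<Sum>i<rs. Mx * x ^ (i - L))"
    proof (rule sum_mono)
      fix i assume i: "i \<in> {..<rs}"
      have "i - L \<le> (rs - L) - (rs - Suc i)" using i by auto
      then have "x ^ ((rs - L) - (rs - Suc i)) \<le> x ^ (i - L)"
        using x0 xle by (rule power_decreasing)
      then show "Mx * x ^ ((rs - L) - (rs - Suc i)) \<le> Mx * x ^ (i - L)"
        using M1 by (intro mult_left_mono) simp_all
    qed
    also have "\<dots> = Mx * (\<Sum>i<rs. x ^ (i - L))" by (simp add: sum_distrib_left)
    also have "\<dots> \<le> Mx * (real L + 1 / (1 - x))" using G M1 by (intro mult_left_mono) simp_all
    finally show ?thesis .
  qed
  have S2: "(\<Sum>r\<in>{rs..n}. aa n r) \<le> Mx * (real L + 1 / (1 - x))"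
  proof -
    have "(\<Sum>r\<in>{rs..n}. aa n r) \<le> (\<Sum>r\<in>{rs..n}. Mx * x ^ (r - (rs + L)))"
      by (rule sum_mono, rule pt_hi) simp
    also have "\<dots> = (\<Sum>i\<in>{0..n - rs}. Mx * x ^ ((i + rs) - (rs + L)))"
    proof -
      have "{rs..n} = {0 + rs..(n - rs) + rs}" using rsn by simp
      then show ?thesis by (simp only: sum.shift_bounds_cl_nat_ivl)
    qed
    also have "\<dots> = (\<Sum>i<Suc (n - rs). Mx * x ^ (i - L))"
      by (rule sum.cong) auto
    also have "\<dots> = Mx * (\<Sum>i<Suc (n - rs). x ^ (i - L))" by (simp only: sum_distrib_left)
    also have "\<dots> \<le> Mx * (real L + 1 / (1 - x))" using G[of "Suc (n - rs)"] M1 by (intro mult_left_mono) (simp_all del: sum.lessThan_Suc)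
    finally show ?thesis .
  qed
  have split: "(\<Sum>r\<le>n. aa n r) = (\<Sum>r<rs. aa n r) + (\<Sum>r\<in>{rs..n}. aa n r)"
  proof -
    have "{..n} = {..<rs} \<union> {rs..n}" using rsn by auto
    moreover have "{..<rs} \<inter> {rs..n} = {}" by auto
    ultimately show ?thesis by (simp add: sum.union_disjoint)
  qed
  have inv: "1 / (1 - x) = (real n + 1) / (2 * real L)"
    unfolding x_def using L1 by simp
  have "(\<Sum>r\<le>n. aa n r) \<le> Mx * (real L + 1 / (1 - x)) + Mx * (real L + 1 / (1 - x))"
    using split S1 S2 by linarith
  also have "\<dots> = Mx * (2 * real L + 2 * (1 / (1 - x)))" by (simp add: algebra_simps)
  also have "\<dots> = Mx * (2 * real L + 2 * ((real n + 1) / (2 * real L)))" by (simp only: inv)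
  also have "\<dots> \<le> Mx * (7 * sqrt (real n))"
  proof (rule mult_left_mono)
    have a: "2 * real L \<le> 2 * sqrt (real n)" using L_le by simp
    have b: "2 * ((real n + 1) / (2 * real L)) \<le> 4 * sqrt (real n)"
    proof -
      have Lp: "real L > 0" using L1 by simp
      have "sqrt (real n) \<le> 2 * real L" using L_gt L1 by simp
      then have "sqrt (real n) * sqrt (real n) \<le> 2 * real L * sqrt (real n)"
        by (intro mult_right_mono) simp_all
      then have "real n \<le> 2 * real L * sqrt (real n)" by simp
      then have "real n + 1 \<le> 4 * real L * sqrt (real n)" using n1 by simp
      then show ?thesis using Lp by (simp add: field_simps)
    qed
    show "2 * real L + 2 * ((real n + 1) / (2 * real L)) \<le> 7 * sqrt (real n)"
      using a b sq1 by linarith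
    show "0 \<le> Mx" using M1 by simp
  qed
  finally show ?thesis by (simp add: mult.commute mult.left_commute)
qed

lemma tail_bound:
  fixes n :: nat
  shows "real (2 ^ (n div 2 + n div 8)) * sqrt (real n) \<le> 256 * (8/5) ^ n"
proof -
  define t where "t = n div 8"
  have e1: "n div 2 + n div 8 \<le> 5 * t + 3" unfolding t_def by linarith
  have "real (2 ^ (n div 2 + n div 8)) \<le> 2 ^ (5 * t + 3)"
  proof -
    have "(2::nat) ^ (n div 2 + n div 8) \<le> 2 ^ (5 * t + 3)" using e1 by (intro power_increasing) simp_all
    then show ?thesis by (metis of_nat_le_iff of_nat_numeral of_nat_power)
  qed
  also have "(2::real) ^ (5 * t + 3) = 8 * 32 ^ t" by (simp add: power_add power_mult)
  finally have T: "real (2 ^ (n div 2 + n div 8)) \<le> 8 * 32 ^ t" .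
  have sq: "sqrt (real n) \<le> 8 * (real t + 1)"
  proof -
    have "sqrt (real n) \<le> real n"
    proof (cases "n = 0")
      case True then show ?thesis by simp
    next
      case False
      then have "1 \<le> real n" by simp
      then have s1: "1 \<le> sqrt (real n)" by simp
      have "sqrt (real n) * 1 \<le> sqrt (real n) * sqrt (real n)"
        using s1 by (intro mult_left_mono) simp_all
      then show ?thesis by simp
    qed
    also have "real n \<le> 8 * (real t + 1)"
    proof -
      have "n \<le> 8 * (t + 1)" unfolding t_def by presburger
      then have "real n \<le> real (8 * (t + 1))" by (simp only: of_nat_le_iff)
      then show ?thesis by simp
    qed
    finally show ?thesis .
  qed
  have B: "(real t + 1) * 32 ^ t \<le> 4 * 42 ^ t"
  proof -
    have "1 + real t * (5/16) \<le> (1 + 5/16::real) ^ t" by (rule Bernoulli_inequality) simp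
    then have "(real t + 1) \<le> 4 * (21/16::real) ^ t" by simp
    then have "(real t + 1) * 32 ^ t \<le> 4 * (21/16) ^ t * 32 ^ t" by (intro mult_right_mono) simp_all
    also have "\<dots> = 4 * ((21/16) * 32) ^ t" by (simp only: power_mult_distrib mult.assoc)
    also have "\<dots> = 4 * 42 ^ t" by simp
    finally show ?thesis .
  qed
  have P: "(42::real) ^ t \<le> (8/5) ^ n"
  proof -
    have "(42::real) \<le> (8/5) ^ 8" by (simp add: power_numeral_reduce)
    then have "(42::real) ^ t \<le> ((8/5) ^ 8) ^ t" by (intro power_mono) simp_all
    also have "\<dots> = (8/5) ^ (8 * t)" by (simp add: power_mult)
    also have "\<dots> \<le> (8/5) ^ n" unfolding t_def by (intro power_increasing) simp_all
    finally show ?thesis .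
  qed
  have "real (2 ^ (n div 2 + n div 8)) * sqrt (real n) \<le> (8 * 32 ^ t) * (8 * (real t + 1))"
    using T sq by (intro mult_mono) simp_all
  also have "\<dots> = 64 * ((real t + 1) * 32 ^ t)" by (simp add: algebra_simps)
  also have "\<dots> \<le> 64 * (4 * 42 ^ t)" using B by simp
  also have "\<dots> \<le> 256 * (8/5) ^ n" using P by simp
  finally show ?thesis .
qed

lemma block_term:
  assumes n1: "n \<ge> 1"
  shows "real (d choose (d div 2)) \<le> sqrt 8 / sqrt (real n) * 2 ^ d + 2 ^ (n div 8)"
proof (cases "n \<le> 8 * d")
  case True
  have c: "real (d choose (d div 2)) \<le> 2 ^ d / sqrt (real d + 1)" by (rule central_real)
  have "sqrt (real n) \<le> sqrt 8 * sqrt (real d + 1)"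
    using True by (simp add: real_sqrt_mult[symmetric])
  then have "2 ^ d / sqrt (real d + 1) \<le> sqrt 8 / sqrt (real n) * 2 ^ d"
    using n1 by (simp add: field_simps)
  moreover have "(0::real) \<le> 2 ^ (n div 8)" by simp
  ultimately show ?thesis using c by linarith
next
  case False
  have "real (d choose (d div 2)) \<le> 2 ^ d"
    using binomial_le_pow2[of d "d div 2"] by (metis of_nat_le_iff of_nat_numeral of_nat_power)
  also have "(2::real) ^ d \<le> 2 ^ (n div 8)" using False by (intro power_increasing) auto
  finally have h: "real (d choose (d div 2)) \<le> 2 ^ (n div 8)" .
  have "0 \<le> sqrt 8 / sqrt (real n) * (2::real) ^ d" by simp
  then show ?thesis using h by linarith
qed

lemma main_bound:
  assumes n1: "n \<ge> 1"
  shows "real (s_path n) \<le> 2000 * real (Max {card (Q_path_r n r) | r. r \<le> n})"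
proof -
  define M where "M = Max {card (Q_path_r n r) | r. r \<le> n}"
  have Sset: "{card (Q_path_r n r) | r. r \<le> n} = (\<lambda>r. card (Q_path_r n r)) ` {..n}" by auto
  have Sfin: "finite {card (Q_path_r n r) | r. r \<le> n}" unfolding Sset by simp
  have Sne: "{card (Q_path_r n r) | r. r \<le> n} \<noteq> {}" unfolding Sset by simp
  have Mge: "card (Q_path_r n r) \<le> M" if "r \<le> n" for r
    unfolding M_def using Sfin that by (intro Max_ge) auto
  obtain rs where rs: "rs \<le> n" "card (Q_path_r n rs) = M"
    using Max_in[OF Sfin Sne] unfolding M_def[symmetric] by auto
  have aaeq: "aa n r = real (card (Q_path_r n r))" for r unfolding aa_def card_Qr by simp
  define F where "F = card (Q_path n)"
  have Fsum: "F = (\<Sum>r\<le>n. card (Q_path_r n r))"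
  proof -
    have "card (Q_path n) = (\<Sum>r\<in>{..n}. card {A \<in> Q_path n. card A = r})"
    proof (rule card_fibers[where g = card])
      show "finite (Q_path n)" by (rule Q_fin)
      show "finite {..n}" by simp
      show "card ` Q_path n \<subseteq> {..n}"
      proof
        fix k assume "k \<in> card ` Q_path n"
        then obtain A where A: "A \<in> Q_path n" "k = card A" by blast
        have "A \<subseteq> {1..n}" using A Q_sub by blast
        then have "card A \<le> card {1..n}" by (intro card_mono) simp_all
        then show "k \<in> {..n}" using A by simp
      qed
    qed
    then show ?thesis unfolding F_def Qr_alt by simp
  qed
  have FM: "real F \<le> 7 * sqrt (real n) * real M"
  proof -
    have "real F = (\<Sum>r\<le>n. aa n r)" unfolding Fsum aaeq by simp
    also have "\<dots> \<le> 7 * sqrt (real n) * real M"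
      by (rule sum_bound[OF n1]) (use Mge rs aaeq in auto)
    finally show ?thesis .
  qed
  have Flow: "(8/5) ^ n \<le> real F" unfolding F_def by (rule card_Q_lower)
  define U where "U = (\<Sum>E\<in>Pow (Ev n). card (fr n E) choose (card (fr n E) div 2))"
  have sU: "s_path n \<le> U"
  proof -
    let ?S = "{card G | G. is_antichain_in G (Q_path n)}"
    have sub: "?S \<subseteq> {..card (Q_path n)}"
    proof
      fix k assume "k \<in> ?S"
      then obtain G where G: "k = card G" "is_antichain_in G (Q_path n)" by blast
      then have "G \<subseteq> Q_path n" unfolding is_antichain_in_def by simp
      then have "card G \<le> card (Q_path n)" using Q_fin card_mono by blast
      then show "k \<in> {..card (Q_path n)}" using G by simp
    qed
    have fin: "finite ?S" using sub finite_subset by blast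
    have ne: "?S \<noteq> {}"
    proof -
      have "is_antichain_in {} (Q_path n)" unfolding is_antichain_in_def by simp
      then show ?thesis by blast
    qed
    have "\<forall>k\<in>?S. k \<le> U"
    proof
      fix k assume "k \<in> ?S"
      then obtain G where G: "k = card G" "is_antichain_in G (Q_path n)" by blast
      then have "G \<subseteq> Q_path n" "antich G" unfolding is_antichain_in_def antich_def by auto
      then show "k \<le> U" unfolding U_def G(1) by (rule antichain_blocks)
    qed
    then show ?thesis unfolding s_path_def using Max_le_iff[OF fin ne] by blast
  qed
  have UB: "real U \<le> sqrt 8 / sqrt (real n) * real F + real (2 ^ (n div 2 + n div 8))"
  proof -
    have "real U = (\<Sum>E\<in>Pow (Ev n). real (card (fr n E) choose (card (fr n E) div 2)))"
      unfolding U_def by simp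
    also have "\<dots> \<le> (\<Sum>E\<in>Pow (Ev n). sqrt 8 / sqrt (real n) * 2 ^ card (fr n E) + 2 ^ (n div 8))"
      by (rule sum_mono) (rule block_term[OF n1])
    also have "\<dots> = sqrt 8 / sqrt (real n) * (\<Sum>E\<in>Pow (Ev n). 2 ^ card (fr n E)) + real (card (Pow (Ev n))) * 2 ^ (n div 8)"
      by (simp add: sum.distrib sum_distrib_left)
    also have "(\<Sum>E\<in>Pow (Ev n). (2::real) ^ card (fr n E)) = real F"
      unfolding F_def card_Q_blocks by simp
    also have "real (card (Pow (Ev n))) * (2::real) ^ (n div 8) = real (2 ^ (n div 2 + n div 8))"
      using Ev_fin by (simp add: card_Pow card_Ev power_add)
    finally show ?thesis .
  qed
  have sqp: "sqrt (real n) > 0" using n1 by simp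
  have part1: "sqrt 8 / sqrt (real n) * real F \<le> 21 * real M"
  proof -
    have "sqrt 8 / sqrt (real n) * real F \<le> sqrt 8 / sqrt (real n) * (7 * sqrt (real n) * real M)"
      using FM by (intro mult_left_mono) simp_all
    also have "\<dots> = 7 * sqrt 8 * real M" using sqp by simp
    also have "\<dots> \<le> 21 * real M"
    proof -
      have "sqrt 8 \<le> 3" by (rule real_le_lsqrt) simp_all
      then show ?thesis by (intro mult_right_mono) simp_all
    qed
    finally show ?thesis .
  qed
  have part2: "real (2 ^ (n div 2 + n div 8)) \<le> 1792 * real M"
  proof -
    have "real (2 ^ (n div 2 + n div 8)) * sqrt (real n) \<le> 256 * (8/5) ^ n" by (rule tail_bound)
    also have "\<dots> \<le> 256 * real F" using Flow by simp
    also have "\<dots> \<le> 256 * (7 * sqrt (real n) * real M)" using FM by linarith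
    also have "\<dots> = (1792 * real M) * sqrt (real n)" by simp
    finally show ?thesis using sqp by simp
  qed
  have "real (s_path n) \<le> real U" using sU by simp
  also have "\<dots> \<le> 21 * real M + 1792 * real M" using UB part1 part2 by linarith
  also have "\<dots> \<le> 2000 * real M" by simp
  finally show ?thesis unfolding M_def .
qed

theorem mainTheorem1:
  shows "\<exists>C::real. C > 1 \<and> (\<forall>n::nat. n \<ge> 1 \<longrightarrow>
           real (s_path n) \<le> C * real (Max {card (Q_path_r n r) | r. r \<le> n}))"
  using main_bound by (intro exI[of _ 2000]) auto

end
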